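(* Let $d\ge2$ and let $\mathbf{p}^\star=(1,p_2^\star,\dots,p_d^\star)$ be a maximizer of the problem $$\max\Big\{\frac{\prod_{i=1}^dp_i}{D_1(\mathbf{p})^d}\;:\;\mathbf{p}\in(0,\infty)^d,\ p_1=1,\ D_1(\mathbf{p})^2\ge D_j(\mathbf{p})^2\text{ for all }j\in\{2,\dots,d\}\Big\}.$$ Then $D(\mathbf{p}^\star)=D_1(\mathbf{p}^\star)=D_2(\mathbf{p}^\star)$ and $$p_2^\star=\sqrt{\tfrac13},\qquad p_j^\star=\sqrt{\tfrac23}\,\frac{1}{j-1}\quad\text{for } j\in\{3,\dots,d\}.$$
   Context: For $k\in\{1,\dots,d\}$ let $w_{k,i}=0$ for $i<k$, $w_{k,k}=k$, $w_{k,i}=i-1$ for $k<i\le d$, $D_k(\mathbf{p})=\sqrt{\sum_{i=1}^dw_{k,i}^2p_i^2}$, and $D(\mathbf{p})=\max_{k\in\{1,\dots,d\}}D_k(\mathbf{p})$. *)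

theory Defs
  imports "HOL-Analysis.Analysis"
begin

text \<open>Vectors p in R^d are represented as functions nat => real, only the
  coordinates 1..d are relevant.\<close>

definition w :: "nat \<Rightarrow> nat \<Rightarrow> real" where
  "w k i = (if i < k then 0 else if i = k then real k else real i - 1)"

definition Dk :: "nat \<Rightarrow> nat \<Rightarrow> (nat \<Rightarrow> real) \<Rightarrow> real" where
  "Dk d k p = sqrt (\<Sum>i=1..d. (w k i)^2 * (p i)^2)"

definition Dmax :: "nat \<Rightarrow> (nat \<Rightarrow> real) \<Rightarrow> real" where
  "Dmax d p = Max ((\<lambda>k. Dk d k p) ` {1..d})"

definition feasible :: "nat \<Rightarrow> (nat \<Rightarrow> real) \<Rightarrow> bool" where
  "feasible d p \<longleftrightarrow> (\<forall>i\<in>{1..d}. p i > 0) \<and> p 1 = 1 \<and>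
     (\<forall>j\<in>{2..d}. (Dk d 1 p)^2 \<ge> (Dk d j p)^2)"

definition objective :: "nat \<Rightarrow> (nat \<Rightarrow> real) \<Rightarrow> real" where
  "objective d p = (\<Prod>i=1..d. p i) / (Dk d 1 p)^d"

end

theory Submission imports Defs begin
lemma key:
  fixes a :: real and y :: "nat \<Rightarrow> real" and I :: "nat set"
  assumes fin: "finite I" and a0: "0 < a" and a3: "a \<le> 1/3" and yp: "\<forall>i\<in>I. y i > 0"
    and dd: "d = card I + 2"
  defines "E \<equiv> ln (3*a) + (\<Sum>i\<in>I. ln (3 * y i / 2)) - real d * ln (3 * (1 + a + (\<Sum>i\<in>I. y i)) / (2 * real d))"
  shows "E \<le> 0 \<and> (E = 0 \<longrightarrow> a = 1/3 \<and> (\<forall>i\<in>I. y i = 2/3))"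
proof -
  define T where "T = 1 + a + (\<Sum>i\<in>I. y i)"
  have Sy: "(\<Sum>i\<in>I. y i) \<ge> 0" using yp by (intro sum_nonneg) auto
  have dpos: "real d > 0" using dd by simp
  have Tpos: "T > 0" using Sy a0 T_def by simp
  define s where "s = 3 * T / (2 * real d)"
  have spos: "s > 0" using Tpos dpos s_def by simp
  define v where "v = 3 * (1 + a) / 4"
  have vpos: "v > 0" using a0 v_def by simp
  define u where "u = v / s"
  have upos: "u > 0" using vpos spos u_def by simp
  define A where "A = (\<Sum>i\<in>I. (ln (3 * y i / (2 * s)) - (3 * y i / (2 * s) - 1)))"
  define B where "B = ln (3*a) - 2 * ln v"
  define C where "C = 2 * (ln u + 1 - u)"
  have Aterm: "\<forall>i\<in>I. ln (3 * y i / (2 * s)) - (3 * y i / (2 * s) - 1) \<le> 0"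
    using yp spos ln_le_minus_one by (simp add: ln_le_minus_one)
  have Ale: "A \<le> 0" unfolding A_def using Aterm by (intro sum_nonpos) auto
  have Cle: "C \<le> 0" using ln_le_minus_one[OF upos] C_def by simp
  have va: "3*a \<le> v^2"
  proof -
    have "v^2 - 3*a = 3*((1-3*a)*(3-a))/16" unfolding v_def by (simp add: power2_eq_square field_simps)
    moreover have "(1-3*a)*(3-a) \<ge> 0" using a3 by (intro mult_nonneg_nonneg) auto
    ultimately show ?thesis by simp
  qed
  have Ble: "B \<le> 0"
  proof -
    have "ln (3*a) \<le> ln (v^2)" using ln_le_cancel_iff[of "3*a" "v^2"] va a0 vpos by simp
    also have "ln (v^2) = 2 * ln v" using vpos by (simp add: ln_realpow)
    finally show ?thesis using B_def by simp
  qed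
  have lnA: "(\<Sum>i\<in>I. ln (3 * y i / (2 * s))) = (\<Sum>i\<in>I. ln (3 * y i / 2)) - real (card I) * ln s"
  proof -
    have "(\<Sum>i\<in>I. ln (3 * y i / (2 * s))) = (\<Sum>i\<in>I. ln (3 * y i / 2) - ln s)"
    proof (rule sum.cong)
      fix i assume "i \<in> I"
      then have "y i > 0" using yp by auto
      then have "ln (3 * y i / 2 / s) = ln (3 * y i / 2) - ln s" using spos by (simp add: ln_div ln_mult)
      then show "ln (3 * y i / (2 * s)) = ln (3 * y i / 2) - ln s" by (simp add: divide_divide_eq_left mult.commute)
    qed simp
    then show ?thesis by (simp add: sum_subtractf)
  qed
  have lin: "(\<Sum>i\<in>I. (3 * y i / (2 * s) - 1)) = 3 * (\<Sum>i\<in>I. y i) / (2 * s) - real (card I)"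
    by (simp add: sum_subtractf sum_divide_distrib[symmetric] sum_distrib_left[symmetric])
  have sumy: "(\<Sum>i\<in>I. y i) = T - 1 - a" using T_def by simp
  have lnu: "ln u = ln v - ln s" using u_def vpos spos by (simp add: ln_div)
  have Ts: "T = 2 * real d * s / 3" using s_def dpos by simp
  have key2: "3 * (\<Sum>i\<in>I. y i) / (2 * s) = real d - 2 * u"
    unfolding sumy Ts u_def v_def using spos by (simp add: field_simps)
  have EA: "E = A + B + C"
  proof -
    have "A = (\<Sum>i\<in>I. ln (3 * y i / 2)) - real (card I) * ln s - (real d - 2*u - real (card I))"
    proof -
      have "A = (\<Sum>i\<in>I. ln (3 * y i / (2 * s))) - (\<Sum>i\<in>I. (3 * y i / (2 * s) - 1))"
        unfolding A_def by (rule sum_subtractf)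
      then show ?thesis unfolding lnA lin key2 by simp
    qed
    moreover have "E = ln (3*a) + (\<Sum>i\<in>I. ln (3 * y i / 2)) - real d * ln s"
      unfolding E_def s_def T_def by simp
    ultimately show ?thesis unfolding B_def C_def lnu using dd by (simp add: algebra_simps)
  qed
  show ?thesis
  proof
    show "E \<le> 0" using EA Ale Ble Cle by simp
  next
    show "E = 0 \<longrightarrow> a = 1/3 \<and> (\<forall>i\<in>I. y i = 2/3)"
    proof
      assume E0: "E = 0"
      have A0: "A = 0" and B0: "B = 0" and C0: "C = 0" using EA Ale Ble Cle E0 by auto
      have "ln (3*a) = ln (v^2)" using B0 B_def vpos by (simp add: ln_realpow)
      then have "3*a = v^2" using ln_inj_iff[of "3*a" "v^2"] a0 vpos by simp
      then have "(3*a - 1) * (a - 3) = 0" unfolding v_def by (simp add: power2_eq_square algebra_simps)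
      then have aa: "a = 1/3" using a3 by auto
      have "u = 1" using C0 C_def ln_eq_minus_one[OF upos] by simp
      then have s1: "s = 1" using u_def aa v_def spos by (simp add: field_simps)
      have "\<forall>i\<in>I. ln (3 * y i / (2 * s)) - (3 * y i / (2 * s) - 1) = 0"
      proof -
        have "(\<Sum>i\<in>I. (-(ln (3 * y i / (2 * s)) - (3 * y i / (2 * s) - 1)))) = 0"
          using A0 A_def sum_negf[of "\<lambda>i. ln (3 * y i / (2 * s)) - (3 * y i / (2 * s) - 1)" I] by simp
        moreover have "\<forall>i\<in>I. 0 \<le> -(ln (3 * y i / (2 * s)) - (3 * y i / (2 * s) - 1))" using Aterm by auto
        ultimately have "\<forall>i\<in>I. -(ln (3 * y i / (2 * s)) - (3 * y i / (2 * s) - 1)) = 0"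
          using sum_nonneg_eq_0_iff[OF fin, of "\<lambda>i. -(ln (3 * y i / (2 * s)) - (3 * y i / (2 * s) - 1))"] by blast
        then show ?thesis by simp
      qed
      then have "\<forall>i\<in>I. y i = 2/3"
      proof (intro ballI)
        fix i assume "i \<in> I"
        with \<open>\<forall>i\<in>I. ln (3 * y i / (2 * s)) - (3 * y i / (2 * s) - 1) = 0\<close> yp
        have "ln (3 * y i / 2) = 3 * y i / 2 - 1" "y i > 0" using s1 by auto
        then have "3 * y i / 2 = 1" using ln_eq_minus_one[of "3 * y i / 2"] by simp
        then show "y i = 2/3" by simp
      qed
      then show "a = 1/3 \<and> (\<forall>i\<in>I. y i = 2/3)" using aa by simp
    qed
  qed
qed


lemma sum_split3:
  fixes f :: "nat \<Rightarrow> real"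
  assumes "2 \<le> d"
  shows "(\<Sum>i=1..d. f i) = f 1 + f 2 + (\<Sum>i=3..d. f i)"
proof -
  have "{1..d} = insert 1 (insert 2 {3..d})" using assms by auto
  then show ?thesis by simp
qed

lemma prod_split3:
  fixes f :: "nat \<Rightarrow> real"
  assumes "2 \<le> d"
  shows "(\<Prod>i=1..d. f i) = f 1 * f 2 * (\<Prod>i=3..d. f i)"
proof -
  have "{1..d} = insert 1 (insert 2 {3..d})" using assms by auto
  then show ?thesis by simp
qed

lemma Dk_sq: "(Dk d k q)^2 = (\<Sum>i=1..d. (w k i)^2 * (q i)^2)"
  unfolding Dk_def by (rule real_sqrt_pow2) (intro sum_nonneg, simp)

lemma Dk_nonneg: "Dk d k q \<ge> 0"
  unfolding Dk_def by (intro real_sqrt_ge_zero sum_nonneg) simp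

lemma D1_sq:
  assumes "2 \<le> d"
  shows "(Dk d 1 q)^2 = (q 1)^2 + (q 2)^2 + (\<Sum>i=3..d. (real i - 1)^2 * (q i)^2)"
proof -
  have "(\<Sum>i=3..d. (w 1 i)^2 * (q i)^2) = (\<Sum>i=3..d. (real i - 1)^2 * (q i)^2)"
    by (rule sum.cong) (auto simp: w_def)
  then show ?thesis unfolding Dk_sq sum_split3[OF assms] by (simp add: w_def)
qed

lemma D2_sq:
  assumes "2 \<le> d"
  shows "(Dk d 2 q)^2 = 4 * (q 2)^2 + (\<Sum>i=3..d. (real i - 1)^2 * (q i)^2)"
proof -
  have "(\<Sum>i=3..d. (w 2 i)^2 * (q i)^2) = (\<Sum>i=3..d. (real i - 1)^2 * (q i)^2)"
    by (rule sum.cong) (auto simp: w_def)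
  then show ?thesis unfolding Dk_sq sum_split3[OF assms] by (simp add: w_def)
qed

definition pc :: "nat \<Rightarrow> real" where
  "pc i = (if i = 1 then 1 else if i = 2 then sqrt (1/3) else sqrt (2/3) * (1 / (real i - 1)))"

lemma pc_pos: "i \<ge> 1 \<Longrightarrow> pc i > 0"
  unfolding pc_def by auto

lemma pc_y: "i \<ge> 3 \<Longrightarrow> (real i - 1)^2 * (pc i)^2 = 2/3"
proof -
  assume "i \<ge> 3"
  then have ne: "real i - 1 \<noteq> 0" by simp
  have "(pc i)^2 = (2/3) / (real i - 1)^2" using \<open>i \<ge> 3\<close> unfolding pc_def by (simp add: power_divide)
  then show ?thesis using ne by simp
qed

lemma pc_feasible:
  assumes d2: "2 \<le> d"
  shows "feasible d pc"
  unfolding feasible_def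
proof (intro conjI ballI)
  fix i assume "i \<in> {1..d}" then show "pc i > 0" using pc_pos by auto
next
  show "pc 1 = 1" by (simp add: pc_def)
next
  fix j assume j: "j \<in> {2..d}"
  show "(Dk d j pc)^2 \<le> (Dk d 1 pc)^2"
  proof (cases "j = 2")
    case True
    have "(pc 2)^2 = 1/3" by (simp add: pc_def)
    moreover have "pc 1 = 1" by (simp add: pc_def)
    ultimately have "(Dk d 1 pc)^2 - (Dk d 2 pc)^2 = 0" unfolding D1_sq[OF d2] D2_sq[OF d2] by simp
    then show ?thesis using True by simp
  next
    case False
    then have j3: "j \<ge> 3" "j \<le> d" using j by auto
    define h where "h i = (w 1 i)^2 * (pc i)^2 - (w j i)^2 * (pc i)^2" for i
    have "(Dk d 1 pc)^2 - (Dk d j pc)^2 = (\<Sum>i=1..d. h i)"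
      unfolding Dk_sq h_def by (simp add: sum_subtractf)
    moreover have "(\<Sum>i\<in>{1,2,j}. h i) \<le> (\<Sum>i=1..d. h i)"
    proof (rule sum_mono2)
      show "{1,2,j} \<subseteq> {1..d}" using j3 by auto
      fix b assume b: "b \<in> {1..d} - {1,2,j}"
      show "0 \<le> h b"
      proof (cases "b < j")
        case True then show ?thesis unfolding h_def w_def by simp
      next
        case False then have "b > j" using b by auto
        then show ?thesis unfolding h_def w_def by simp
      qed
    qed simp
    moreover have "(\<Sum>i\<in>{1,2,j}. h i) \<ge> 0"
    proof -
      have h1: "h 1 = 1" using j3 unfolding h_def w_def pc_def by simp
      have h2: "h 2 = 1/3" using j3 unfolding h_def w_def pc_def by (simp add: power2_eq_square)
      have "(pc j)^2 = (2/3) / (real j - 1)^2" using pc_y[OF j3(1)] j3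
        by (simp add: field_simps)
      then have hj: "h j = 2/3 - (real j)^2 * ((2/3) / (real j - 1)^2)"
        using j3 pc_y[OF j3(1)] unfolding h_def w_def by simp
      have jj: "real j \<ge> 3" using j3 by simp
      have pos: "(real j - 1)^2 > 0" using jj by simp
      have "(real j)^2 \<le> 3 * (real j - 1)^2"
      proof -
        have "3 * (real j - 1)^2 - (real j)^2 = (2*real j - 3) * (real j - 3) + 3 * real j - 6" 
          by (simp add: power2_eq_square algebra_simps)
        moreover have "(2*real j - 3) * (real j - 3) \<ge> 0" using jj by (intro mult_nonneg_nonneg) auto
        ultimately show ?thesis using jj by linarith
      qed
      then have "(real j)^2 / (real j - 1)^2 \<le> 3" using pos by (simp add: divide_le_eq)
      moreover have "h j = 2/3 - (2/3) * ((real j)^2 / (real j - 1)^2)"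
        unfolding hj by simp
      ultimately have "h j \<ge> -4/3" by simp
      moreover have "(\<Sum>i\<in>{1,2,j}. h i) = h 1 + h 2 + h j" using j3 by simp
      ultimately show ?thesis using h1 h2 by simp
    qed
    ultimately show ?thesis by simp
  qed
qed


lemma obj_pos:
  assumes d2: "2 \<le> d" and f: "feasible d q"
  shows "objective d q > 0" and "Dk d 1 q > 0"
proof -
  have qpos: "\<forall>i\<in>{1..d}. q i > 0" and q1: "q 1 = 1" using f unfolding feasible_def by auto
  have S0: "(\<Sum>i=3..d. (real i - 1)^2 * (q i)^2) \<ge> 0" by (intro sum_nonneg) simp
  have "(Dk d 1 q)^2 > 0" unfolding D1_sq[OF d2] q1 using S0 by (simp add: add_pos_nonneg)
  then have "Dk d 1 q \<noteq> 0" by auto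
  then show D: "Dk d 1 q > 0" using Dk_nonneg[of d 1 q] by linarith
  have "(\<Prod>i=1..d. q i) > 0" using qpos by (intro prod_pos) auto
  then show "objective d q > 0" unfolding objective_def using D by simp
qed

lemma Eform:
  assumes d2: "2 \<le> d" and f: "feasible d q"
  shows "ln (3 * (q 2)^2) + (\<Sum>i\<in>{3..d}. ln (3 * ((real i - 1)^2 * (q i)^2) / 2))
     - real d * ln (3 * (1 + (q 2)^2 + (\<Sum>i\<in>{3..d}. (real i - 1)^2 * (q i)^2)) / (2 * real d))
   = 2 * ln (objective d q) + (\<Sum>i\<in>{3..d}. 2 * ln (real i - 1)) + ln 3
     + real (card {3..d}) * ln (3/2) - real d * ln (3 / (2 * real d))"
proof -
  have qpos: "\<And>i. i \<in> {1..d} \<Longrightarrow> q i > 0" and q1: "q 1 = 1" using f unfolding feasible_def by auto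
  have q2: "q 2 > 0" using qpos d2 by auto
  define S where "S = (\<Sum>i\<in>{3..d}. (real i - 1)^2 * (q i)^2)"
  define T where "T = 1 + (q 2)^2 + S"
  have DT: "(Dk d 1 q)^2 = T" unfolding T_def S_def D1_sq[OF d2] q1 by simp
  have Dpos: "Dk d 1 q > 0" and opos: "objective d q > 0" using obj_pos[OF d2 f] by auto
  have Tpos: "T > 0" using DT Dpos by (metis zero_less_power)
  have P: "(\<Prod>i=1..d. q i) > 0" using qpos by (intro prod_pos) auto
  have lnP: "ln (\<Prod>i=1..d. q i) = ln (q 2) + (\<Sum>i\<in>{3..d}. ln (q i))"
  proof -
    have "ln (\<Prod>i=1..d. q i) = (\<Sum>i=1..d. ln (q i))"
    proof (rule ln_prod)
      fix i assume "i \<in> {1..d}" then show "q i \<noteq> 0" using qpos[of i] by simp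
    qed simp
    then show ?thesis unfolding sum_split3[OF d2] q1 by simp
  qed
  have lnobj: "2 * ln (objective d q) = 2 * ln (q 2) + 2 * (\<Sum>i\<in>{3..d}. ln (q i)) - real d * ln T"
  proof -
    have "ln (objective d q) = ln (\<Prod>i=1..d. q i) - ln ((Dk d 1 q)^d)"
      unfolding objective_def by (rule ln_divide_pos[OF P]) (use Dpos in simp)
    also have "ln ((Dk d 1 q)^d) = real d * ln (Dk d 1 q)" by (simp add: ln_realpow)
    finally have "ln (objective d q) = ln (q 2) + (\<Sum>i\<in>{3..d}. ln (q i)) - real d * ln (Dk d 1 q)"
      unfolding lnP .
    moreover have "2 * ln (Dk d 1 q) = ln T" unfolding DT[symmetric] ln_realpow by simp
    moreover have "real d * ln T = 2 * (real d * ln (Dk d 1 q))"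
      using \<open>2 * ln (Dk d 1 q) = ln T\<close> by (metis mult.left_commute)
    ultimately show ?thesis by linarith
  qed
  have terms: "(\<Sum>i\<in>{3..d}. ln (3 * ((real i - 1)^2 * (q i)^2) / 2))
      = (\<Sum>i\<in>{3..d}. ln (3/2) + 2 * ln (real i - 1) + 2 * ln (q i))"
  proof (rule sum.cong)
    fix i assume i: "i \<in> {3..d}"
    then have qi: "q i > 0" using qpos by auto
    have ip: "real i - 1 > 0" using i by auto
    have e: "3 * ((real i - 1)^2 * (q i)^2) / 2 = (3/2) * ((real i - 1)^2 * (q i)^2)" by simp
    have "ln ((3/2) * ((real i - 1)^2 * (q i)^2)) = ln (3/2) + (ln ((real i - 1)^2) + ln ((q i)^2))"
    proof -
      have "ln ((3/2) * ((real i - 1)^2 * (q i)^2)) = ln (3/2) + ln ((real i - 1)^2 * (q i)^2)"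
        by (rule ln_mult_pos) (use qi ip in simp_all)
      moreover have "ln ((real i - 1)^2 * (q i)^2) = ln ((real i - 1)^2) + ln ((q i)^2)"
        by (rule ln_mult_pos) (use qi ip in simp_all)
      ultimately show ?thesis by simp
    qed
    then show "ln (3 * ((real i - 1)^2 * (q i)^2) / 2) = ln (3/2) + 2 * ln (real i - 1) + 2 * ln (q i)"
      unfolding e ln_realpow by simp
  qed simp
  have l3: "ln (3 * (q 2)^2) = ln 3 + 2 * ln (q 2)" using q2 ln_mult_pos[of 3 "(q 2)^2"] by (simp add: ln_realpow)
  have lT: "ln (3 * T / (2 * real d)) = ln (3 / (2 * real d)) + ln T"
  proof -
    have "3 * T / (2 * real d) = (3 / (2 * real d)) * T" by simp
    moreover have "ln ((3 / (2 * real d)) * T) = ln (3 / (2 * real d)) + ln T"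
      using Tpos d2 by (intro ln_mult_pos) auto
    ultimately show ?thesis by simp
  qed
  have sd: "(\<Sum>i\<in>{3..d}. ln (3/2) + 2 * ln (real i - 1) + 2 * ln (q i))
     = real (card {3..d}) * ln (3/2) + (\<Sum>i\<in>{3..d}. 2 * ln (real i - 1)) + 2 * (\<Sum>i\<in>{3..d}. ln (q i))"
    by (simp add: sum.distrib sum_distrib_left)
  have md: "real d * (ln (3/(2*real d)) + ln T) = real d * ln (3/(2*real d)) + real d * ln T"
    by (simp add: distrib_left)
  show ?thesis
    unfolding S_def[symmetric] T_def[symmetric] l3 lT terms sd md using lnobj by linarith
qed

theorem lemma7:
  fixes d :: nat and p :: "nat \<Rightarrow> real"
  assumes "d \<ge> 2"
    and "feasible d p"
    and "\<forall>q. feasible d q \<longrightarrow> objective d q \<le> objective d p"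
  shows "Dmax d p = Dk d 1 p \<and> Dk d 1 p = Dk d 2 p \<and>
         p 2 = sqrt (1/3) \<and>
         (\<forall>j\<in>{3..d}. p j = sqrt (2/3) * (1 / (real j - 1)))"
proof -
  note d2 = assms(1) and f = assms(2)
  have ppos: "\<And>i. i \<in> {1..d} \<Longrightarrow> p i > 0" and p1: "p 1 = 1" using f unfolding feasible_def by auto
  have fc: "feasible d pc" using pc_feasible[OF d2] .
  have le: "objective d pc \<le> objective d p" using assms(3) fc by blast
  have lnle: "ln (objective d pc) \<le> ln (objective d p)"
    using le obj_pos[OF d2 fc] obj_pos[OF d2 f] by simp
  define a where "a = (p 2)^2"
  define y where "y i = (real i - 1)^2 * (p i)^2" for i
  have p2: "p 2 > 0" using ppos d2 by auto
  have a0: "0 < a" using p2 a_def by simp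
  have D21: "(Dk d 2 p)^2 \<le> (Dk d 1 p)^2" using f d2 unfolding feasible_def by auto
  then have a3: "a \<le> 1/3" unfolding D1_sq[OF d2] D2_sq[OF d2] p1 a_def by simp
  have yp: "\<forall>i\<in>{3..d}. y i > 0"
  proof
    fix i assume i: "i \<in> {3..d}"
    then have "p i > 0" "real i - 1 > 0" using ppos by auto
    then show "y i > 0" unfolding y_def by simp
  qed
  have dd: "d = card {3..d} + 2" using d2 by simp
  define E where "E = ln (3*a) + (\<Sum>i\<in>{3..d}. ln (3 * y i / 2)) - real d * ln (3 * (1 + a + (\<Sum>i\<in>{3..d}. y i)) / (2 * real d))"
  have K: "E \<le> 0 \<and> (E = 0 \<longrightarrow> a = 1/3 \<and> (\<forall>i\<in>{3..d}. y i = 2/3))"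
    unfolding E_def by (rule key[OF _ a0 a3 yp dd]) simp
  have Ep: "E = 2 * ln (objective d p) + (\<Sum>i\<in>{3..d}. 2 * ln (real i - 1)) + ln 3
     + real (card {3..d}) * ln (3/2) - real d * ln (3 / (2 * real d))"
    unfolding E_def a_def y_def by (rule Eform[OF d2 f])
  have Ec0: "ln (3 * (pc 2)^2) + (\<Sum>i\<in>{3..d}. ln (3 * ((real i - 1)^2 * (pc i)^2) / 2))
     - real d * ln (3 * (1 + (pc 2)^2 + (\<Sum>i\<in>{3..d}. (real i - 1)^2 * (pc i)^2)) / (2 * real d)) = 0"
  proof -
    have a: "(pc 2)^2 = 1/3" by (simp add: pc_def)
    have s1: "(\<Sum>i\<in>{3..d}. ln (3 * ((real i - 1)^2 * (pc i)^2) / 2)) = 0"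
      by (simp add: pc_y)
    have s2: "(\<Sum>i\<in>{3..d}. (real i - 1)^2 * (pc i)^2) = (real d - 2) * (2/3)"
      using d2 by (simp add: pc_y of_nat_diff)
    have "3 * (1 + 1/3 + (real d - 2) * (2/3)) / (2 * real d) = 1" using d2 by (simp add: field_simps)
    then show ?thesis unfolding a s1 s2 by simp
  qed
  have Ec: "0 = 2 * ln (objective d pc) + (\<Sum>i\<in>{3..d}. 2 * ln (real i - 1)) + ln 3
     + real (card {3..d}) * ln (3/2) - real d * ln (3 / (2 * real d))"
    using Eform[OF d2 fc] Ec0 by simp
  have "E \<ge> 0" using Ep Ec lnle by linarith
  then have "E = 0" using K by simp
  then have aa: "a = 1/3" and yy: "\<forall>i\<in>{3..d}. y i = 2/3" using K by auto
  have P2: "p 2 = sqrt (1/3)" using aa a_def p2 by (simp add: real_sqrt_unique)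
  have PJ: "\<forall>j\<in>{3..d}. p j = sqrt (2/3) * (1 / (real j - 1))"
  proof
    fix j assume j: "j \<in> {3..d}"
    then have pj: "p j > 0" using ppos by auto
    have jp: "real j - 1 > 0" using j by auto
    have "((real j - 1) * p j)^2 = 2/3" using yy j unfolding y_def by (simp add: power_mult_distrib)
    then have "sqrt (2/3) = (real j - 1) * p j" using pj jp by (simp add: real_sqrt_unique)
    then show "p j = sqrt (2/3) * (1 / (real j - 1))" using jp by (simp add: field_simps)
  qed
  have D12sq: "(Dk d 1 p)^2 = (Dk d 2 p)^2"
    unfolding D1_sq[OF d2] D2_sq[OF d2] p1 using aa a_def by simp
  have D12: "Dk d 1 p = Dk d 2 p"
    using power2_eq_imp_eq[OF D12sq Dk_nonneg Dk_nonneg] .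
  have DM: "Dmax d p = Dk d 1 p"
    unfolding Dmax_def
  proof (rule Max_eqI)
    fix z assume "z \<in> (\<lambda>k. Dk d k p) ` {1..d}"
    then obtain k where k: "k \<in> {1..d}" "z = Dk d k p" by auto
    show "z \<le> Dk d 1 p"
    proof (cases "k = 1")
      case True then show ?thesis using k by simp
    next
      case False
      then have "(Dk d k p)^2 \<le> (Dk d 1 p)^2" using f k unfolding feasible_def by auto
      then show ?thesis using k power2_le_imp_le Dk_nonneg by metis
    qed
  next
    show "Dk d 1 p \<in> (\<lambda>k. Dk d k p) ` {1..d}" using d2 by auto
  qed simp
  show ?thesis using DM D12 P2 PJ by simp
qed

end
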